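(* Let $0<h<H<\infty$ and $F\in A_h$. Then for all sufficiently small $\epsilon>0$, $$\log\mathcal A^{A_H}_\epsilon(F)\le C\frac Hh\log\frac1\epsilon,$$ where $C$ is a universal constant.
   Context: For $h>0$, $A_h$ is the real vector space of real-valued functions $F$ on $\mathbb R$, periodic with period $2\pi$, that admit an analytic continuation to the strip $\{z\in\mathbb C:|\operatorname{Im}z|\le h\}$ (bounded there), with norm $\|F\|_{A_h}$ equal to the supremum of the absolute value of this continuation on the strip. For a Banach space $\mathcal G$ of such functions and a bounded continuous $F$, the approachability is $\mathcal A^{\mathcal G}_\epsilon(F):=\inf\{\|F^*\|_{\mathcal G}:F^*\in\mathcal G,\ \sup_{x\in\mathbb R}|F(x)-F^*(x)|\le\epsilon\}$. $\log=\log_2$. *)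

theory Defs
  imports "HOL-Analysis.Analysis"
begin

definition strip :: "real \<Rightarrow> complex set" where
  "strip h = {z. \<bar>Im z\<bar> \<le> h}"

definition is_continuation :: "real \<Rightarrow> (real \<Rightarrow> real) \<Rightarrow> (complex \<Rightarrow> complex) \<Rightarrow> bool" where
  "is_continuation h F G \<longleftrightarrow>
     G holomorphic_on {z. \<bar>Im z\<bar> < h} \<and> continuous_on (strip h) G \<and>
     bounded (G ` strip h) \<and> (\<forall>x. G (complex_of_real x) = complex_of_real (F x))"

definition A_space :: "real \<Rightarrow> (real \<Rightarrow> real) set" where
  "A_space h = {F. (\<forall>x. F (x + 2 * pi) = F x) \<and> (\<exists>G. is_continuation h F G)}"

text \<open>Norm: sup of |continuation| on the closed strip (the continuation is unique;
  we take the infimum over all continuations to avoid a choice).\<close>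
definition A_norm :: "real \<Rightarrow> (real \<Rightarrow> real) \<Rightarrow> real" where
  "A_norm h F = Inf {(SUP z\<in>strip h. norm (G z)) | G. is_continuation h F G}"

definition approachability :: "real \<Rightarrow> real \<Rightarrow> (real \<Rightarrow> real) \<Rightarrow> real" where
  "approachability H \<epsilon> F =
     Inf {A_norm H Fs | Fs. Fs \<in> A_space H \<and> (\<forall>x. \<bar>F x - Fs x\<bar> \<le> \<epsilon>)}"

end

theory Submission
  imports Defs "HOL-Complex_Analysis.Complex_Analysis"
begin

lemma strip_eq: "{z::complex. \<bar>Im z\<bar> < h} = {z. Im z < h} \<inter> {z. Im z > -h}"
  by auto

lemma strip_open: "open {z::complex. \<bar>Im z\<bar> < h}"
  unfolding strip_eq by (intro open_Int open_halfspace_Im_lt open_halfspace_Im_gt)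

lemma strip_convex: "convex {z::complex. \<bar>Im z\<bar> < h}"
  unfolding strip_eq by (intro convex_Int convex_halfspace_Im_lt convex_halfspace_Im_gt)

lemma G_periodic:
  assumes hol: "G holomorphic_on {z. \<bar>Im z\<bar> < h}" and h: "0 < h"
    and per: "\<And>x::real. G (of_real (x + 2*pi)) = G (of_real x)"
    and z: "\<bar>Im z\<bar> < h"
  shows "G (z + 2*pi) = G z"
proof -
  let ?S = "{z::complex. \<bar>Im z\<bar> < h}"
  have "(\<lambda>w. G (w + 2*pi) - G w) holomorphic_on ?S"
  proof (intro holomorphic_intros hol)
    have "(\<lambda>w. w + complex_of_real (2*pi)) holomorphic_on ?S" by (intro holomorphic_intros)
    moreover have "(\<lambda>w. w + complex_of_real (2*pi)) ` ?S \<subseteq> ?S" by auto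
    ultimately show "(\<lambda>w. G (w + 2*pi)) holomorphic_on ?S"
      using holomorphic_on_compose_gen[OF _ hol] by (simp add: o_def)
  qed
  moreover have "0 islimpt (range complex_of_real)"
    unfolding islimpt_approachable
  proof (intro allI impI)
    fix e :: real assume "0 < e"
    show "\<exists>x'\<in>range complex_of_real. x' \<noteq> 0 \<and> dist x' 0 < e"
    proof (rule bexI[of _ "complex_of_real (e/2)"])
      show "complex_of_real (e/2) \<in> range complex_of_real" by (rule rangeI)
    qed (use \<open>0<e\<close> in auto)
  qed
  moreover have c: "connected {z::complex. \<bar>Im z\<bar> < h}" using strip_convex convex_connected by blast
  moreover have s: "range complex_of_real \<subseteq> {z. \<bar>Im z\<bar> < h}" using h by auto
  moreover have e: "\<And>w. w \<in> range complex_of_real \<Longrightarrow> G (w + 2*pi) - G w = 0"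
    using per by auto
  ultimately have "G (z + 2*pi) - G z = 0"
    using analytic_continuation[where U = "range complex_of_real" and \<xi> = 0 and S = "{z. \<bar>Im z\<bar> < h}"
       and f = "\<lambda>w. G (w + 2*pi) - G w" and w = z] strip_open[of h] h z by simp
  then show ?thesis by simp
qed

lemma contour_integral_linepath_shift:
  "contour_integral (linepath (p + c) (q + c)) f = contour_integral (linepath p q) (\<lambda>u. f (u + c))"
proof -
  have "\<And>t. linepath (p+c) (q+c) t = linepath p q t + c"
    by (auto simp: linepath_def algebra_simps scaleR_conv_of_real)
  then show ?thesis by (simp add: contour_integral_integral vector_derivative_linepath_at)
qed

lemma geo_err_bound:
  fixes r :: complex
  assumes "norm r = \<rho>" "\<rho> < 1"
  shows "norm (r^N / (1 - r)) \<le> \<rho>^N / (1 - \<rho>)"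
proof -
  have "1 - \<rho> \<le> norm (1 - r)" using norm_triangle_ineq2[of 1 r] assms by simp
  moreover have "0 \<le> \<rho>" using assms(1) by auto
  ultimately show ?thesis
    using assms by (simp add: norm_divide norm_power frac_le)
qed

lemma geo_split:
  fixes r :: complex
  assumes "r \<noteq> 1"
  shows "1 / (1 - r) = (\<Sum>m<N. r^m) + r^N / (1 - r)"
  using assms by (simp add: sum_gp_strict add_divide_distrib[symmetric])

definition alpha :: "(complex \<Rightarrow> complex) \<Rightarrow> real \<Rightarrow> nat \<Rightarrow> complex" where
  "alpha G a m = contour_integral (linepath (Complex (-pi) (-a)) (Complex pi (-a)))
      (\<lambda>u. G u * exp (- (\<i> * of_nat m * u)))"

definition beta :: "(complex \<Rightarrow> complex) \<Rightarrow> real \<Rightarrow> nat \<Rightarrow> complex" where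
  "beta G a m = contour_integral (linepath (Complex pi a) (Complex (-pi) a))
      (\<lambda>u. G u * exp (\<i> * of_nat m * u))"

definition Tpoly :: "(complex \<Rightarrow> complex) \<Rightarrow> real \<Rightarrow> nat \<Rightarrow> complex \<Rightarrow> complex" where
  "Tpoly G a N z = ((\<Sum>m<N. alpha G a m * exp (\<i> * of_nat m * z))
      - (\<Sum>m<N. beta G a (Suc m) * exp (- (\<i> * of_nat (Suc m) * z)))) / (2 * pi)"

lemma core:
  assumes hol: "G holomorphic_on {z. \<bar>Im z\<bar> < h}"
    and per: "\<And>z. \<bar>Im z\<bar> < h \<Longrightarrow> G (z + 2*pi) = G z"
    and bnd: "\<And>z. \<bar>Im z\<bar> < h \<Longrightarrow> norm (G z) \<le> B"
    and a: "0 < a" "a < h" and x: "-pi < x" "x < pi"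
  shows "norm (G (of_real x) - Tpoly G a N (of_real x)) \<le> 2 * B * exp (-a * N) / (1 - exp (-a))"
proof -
  define xc where "xc = complex_of_real x"
  define E where "E = (\<lambda>u::complex. exp (\<i> * u))"
  define K where "K = (\<lambda>u. \<i> * E u / (E u - E xc))"
  define \<Phi> where "\<Phi> = (\<lambda>u. G u * K u)"
  define \<delta> where "\<delta> = pi - \<bar>x\<bar>"
  have \<delta>: "0 < \<delta>" using x by (auto simp: \<delta>_def)
  define S where "S = box (Complex (-pi-\<delta>) (-h)) (Complex (pi+\<delta>) h)"
  have S_in: "u \<in> S \<longleftrightarrow> -pi-\<delta> < Re u \<and> Re u < pi+\<delta> \<and> -h < Im u \<and> Im u < h" for u
    by (auto simp: S_def in_box_complex_iff)
  have S_strip: "S \<subseteq> {z. \<bar>Im z\<bar> < h}" using S_in by auto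
  have Eeq: "E u = E xc \<Longrightarrow> u \<in> S \<Longrightarrow> u = xc" for u
  proof -
    assume "E u = E xc" "u \<in> S"
    then obtain n :: int where n: "\<i>*u = \<i>*xc + of_int (2*n) * pi * \<i>"
      unfolding E_def exp_eq by blast
    have re: "Re u = x + 2 * n * pi" and im: "Im u = 0"
      using arg_cong[OF n, of Im] arg_cong[OF n, of Re] by (auto simp: xc_def)
    have "n = 0"
    proof (rule ccontr)
      assume "n \<noteq> 0"
      then consider "n \<ge> 1" | "n \<le> -1" by linarith
      then show False
      proof cases
        case 1
        have m: "2 * pi * 1 \<le> 2 * pi * n" using 1 by (intro mult_left_mono) auto
        have r: "Re u = x + 2 * pi * n" using re by (simp add: algebra_simps)
        have "Re u < pi + \<delta>" using S_in[of u] \<open>u \<in> S\<close> by auto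
        then show False using m r \<delta>_def abs_ge_minus_self[of x] by linarith
      next
        case 2
        have m: "2 * pi * n \<le> 2 * pi * (-1)" using 2 by (intro mult_left_mono) auto
        have r: "Re u = x + 2 * pi * n" using re by (simp add: algebra_simps)
        have "-pi - \<delta> < Re u" using S_in[of u] \<open>u \<in> S\<close> by auto
        then show False using m r \<delta>_def abs_ge_self[of x] by linarith
      qed
    qed
    then show "u = xc" using re im by (simp add: complex_eq_iff xc_def)
  qed
  define q where "q = (\<lambda>u. if u = xc then deriv E xc else (E u - E xc) / (u - xc))"
  have Eder: "deriv E xc = \<i> * E xc"
    unfolding E_def by (rule DERIV_imp_deriv) (auto intro!: derivative_eq_intros)
  have qhol: "q holomorphic_on S"
    unfolding q_def by (rule pole_lemma_open) (auto simp: E_def S_def intro!: holomorphic_intros)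
  have qnz: "u \<in> S \<Longrightarrow> q u \<noteq> 0" for u
    using Eeq[of u] Eder by (auto simp: q_def E_def)
  define f where "f = (\<lambda>u. G u * (\<i> * E u) / q u)"
  have fhol: "f holomorphic_on S"
    unfolding f_def using qnz
    by (intro holomorphic_intros holomorphic_on_subset[OF hol S_strip] qhol) (auto simp: E_def intro!: holomorphic_intros)
  define a1 where "a1 = Complex (-pi) (-a)"
  define a2 where "a2 = Complex pi (-a)"
  define a3 where "a3 = Complex pi a"
  define a4 where "a4 = Complex (-pi) a"
  have img: "path_image (rectpath a1 a3) \<subseteq> S - {xc}"
  proof -
    have pi: "path_image (rectpath a1 a3) =
           {z. Re z \<in> {-pi, pi} \<and> Im z \<in> {-a..a}} \<union> {z. Im z \<in> {-a, a} \<and> Re z \<in> {-pi..pi}}"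
      using path_image_rectpath[of a1 a3] a by (simp add: a1_def a3_def)
    show ?thesis unfolding pi using a x \<delta> by (auto simp: S_in xc_def)
  qed
  have wn: "winding_number (rectpath a1 a3) xc = 1"
    by (rule winding_number_rectpath) (use x a in \<open>auto simp: a1_def a3_def xc_def in_box_complex_iff\<close>)
  have fx: "f xc = G xc"
    using Eder by (simp add: f_def q_def E_def)
  have cauchy: "((\<lambda>w. f w / (w - xc)) has_contour_integral (2*pi*\<i>*G xc)) (rectpath a1 a3)"
  proof -
    have cS: "convex S" by (simp add: S_def convex_box)
    have "xc \<in> S" using x \<delta> a by (simp add: S_in xc_def)
    then have xS: "xc \<in> interior S" by (metis interior_open open_box S_def)
    show ?thesis
      using Cauchy_integral_formula_convex_simple[OF cS fhol xS, of "rectpath a1 a3"] img wn fx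
      by simp
  qed
  have "norm (G 0) \<le> B" using bnd[of 0] a by simp
  then have B0: "0 \<le> B" using norm_ge_zero[of "G 0"] by linarith
  have Phi_eq: "f w / (w - xc) = \<Phi> w" if "w \<in> S - {xc}" for w
  proof -
    have "q w \<noteq> 0" using qnz that by auto
    moreover have "w - xc \<noteq> 0" using that by auto
    ultimately have d1: "E w - E xc \<noteq> 0" by (auto simp: q_def)
    have d2: "w - xc \<noteq> 0" using that by auto
    have qw: "q w = (E w - E xc) / (w - xc)" using that by (simp add: q_def)
    have gen: "\<And>X Y Z::complex. Z \<noteq> 0 \<Longrightarrow> X / (Y / Z) / Z = X / Y" by (simp add: field_simps)
    show ?thesis unfolding f_def qw \<Phi>_def K_def using gen[OF d2] by simp
  qed
  have rect: "(\<Phi> has_contour_integral (2*pi*\<i>*G xc)) (rectpath a1 a3)"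
    by (rule has_contour_integral_eq[OF cauchy]) (use img Phi_eq in blast)
  have rdef: "rectpath a1 a3 = linepath a1 a2 +++ (linepath a2 a3 +++ (linepath a3 a4 +++ linepath a4 a1))"
    by (simp add: rectpath_def Let_def a1_def a2_def a3_def a4_def)
  have ci: "\<Phi> contour_integrable_on rectpath a1 a3" using rect contour_integrable_on_def by blast
  have ci1: "\<Phi> contour_integrable_on linepath a1 a2"
   and ci2: "\<Phi> contour_integrable_on linepath a2 a3"
   and ci3: "\<Phi> contour_integrable_on linepath a3 a4"
   and ci4: "\<Phi> contour_integrable_on linepath a4 a1"
    using ci unfolding rdef by auto
  define I1 where "I1 = contour_integral (linepath a1 a2) \<Phi>"
  define I2 where "I2 = contour_integral (linepath a2 a3) \<Phi>"
  define I3 where "I3 = contour_integral (linepath a3 a4) \<Phi>"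
  define I4 where "I4 = contour_integral (linepath a4 a1) \<Phi>"
  have sum4: "I1 + I2 + I3 + I4 = 2*pi*\<i>*G xc"
    using contour_integral_unique[OF rect] ci1 ci2 ci3 ci4 unfolding rdef
    by (simp add: I1_def I2_def I3_def I4_def add_ac)
  have I24: "I4 = - I2"
  proof -
    have "I4 = contour_integral (linepath a4 a1) (\<lambda>u. \<Phi> (u + 2*pi))"
      unfolding I4_def
    proof (rule contour_integral_eq)
      fix u assume "u \<in> path_image (linepath a4 a1)"
      then have "\<bar>Im u\<bar> \<le> a" using a by (auto simp: a4_def a1_def closed_segment_same_Re closed_segment_eq_real_ivl)
      then have "\<bar>Im u\<bar> < h" using a by simp
      moreover have "E (u + 2*pi) = E u"
      proof -
        have "exp (\<i> * (2 * complex_of_real pi)) = 1"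
          by (simp add: exp_eq_1 mult.commute)
        then show ?thesis by (simp add: E_def distrib_left exp_add)
      qed
      ultimately show "\<Phi> u = \<Phi> (u + 2*pi)" using per[of u] by (simp add: \<Phi>_def K_def)
    qed
    also have "\<dots> = contour_integral (linepath (a4 + 2*pi) (a1 + 2*pi)) \<Phi>"
      by (rule contour_integral_linepath_shift[symmetric])
    also have "linepath (a4 + 2*pi) (a1 + 2*pi) = reversepath (linepath a2 a3)"
    proof -
      have "a4 + 2*pi = a3" "a1 + 2*pi = a2" by (simp_all add: a1_def a2_def a3_def a4_def complex_eq_iff)
      then show ?thesis by simp
    qed
    also have "contour_integral \<dots> \<Phi> = - I2"
      unfolding I2_def by (rule contour_integral_reversepath) simp
    finally show ?thesis .
  qed
  define \<rho> where "\<rho> = exp (-a)"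
  have \<rho>: "0 < \<rho>" "\<rho> < 1" using a by (auto simp: \<rho>_def)
  have Gcont: "continuous_on {z. \<bar>Im z\<bar> < h} G" using hol holomorphic_on_imp_continuous_on by blast
  have Enz: "E u \<noteq> 0" for u by (simp add: E_def)
  have bot_im: "Im u = -a" if "u \<in> path_image (linepath a1 a2)" for u
    using that by (simp add: a1_def a2_def closed_segment_same_Im)
  have bot_strip: "closed_segment a1 a2 \<subseteq> {z. \<bar>Im z\<bar> < h}"
    using bot_im a by auto
  define r where "r = (\<lambda>u. exp (\<i> * (xc - u)))"
  have r_norm: "norm (r u) = \<rho>" if "Im u = -a" for u
    using that by (simp add: r_def \<rho>_def xc_def)
  have bot_eq: "\<Phi> u = (\<Sum>m<N. (\<i> * exp (\<i> * of_nat m * xc)) * (G u * exp (- (\<i> * of_nat m * u))))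
                + G u * (\<i> * r u ^ N / (1 - r u))" if "Im u = -a" for u
  proof -
    have r1: "r u \<noteq> 1" using r_norm[OF that] \<rho> by auto
    have rE: "r u = E xc / E u" by (simp add: r_def E_def exp_diff[symmetric] algebra_simps)
    have "E u - E xc \<noteq> 0" using r1 Enz[of u] by (auto simp: rE)
    then have "K u = \<i> * (1 / (1 - r u))" using Enz[of u] by (simp add: K_def rE field_simps)
    also have "\<dots> = \<i> * ((\<Sum>m<N. r u ^ m) + r u ^ N / (1 - r u))" using geo_split[OF r1] by simp
    finally have "\<Phi> u = G u * (\<i> * ((\<Sum>m<N. r u ^ m) + r u ^ N / (1 - r u)))" by (simp add: \<Phi>_def)
    moreover have "r u ^ m = exp (\<i> * of_nat m * xc) * exp (- (\<i> * of_nat m * u))" for m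
      by (simp add: r_def exp_of_nat_mult[symmetric] exp_add[symmetric] algebra_simps)
    ultimately show ?thesis by (simp add: algebra_simps sum_distrib_left sum_distrib_right)
  qed
  define S1 where "S1 = (\<Sum>m<N. (\<i> * exp (\<i> * of_nat m * xc)) * alpha G a m)"
  have hS1: "((\<lambda>u. \<Sum>m<N. (\<i> * exp (\<i> * of_nat m * xc)) * (G u * exp (- (\<i> * of_nat m * u))))
      has_contour_integral S1) (linepath a1 a2)"
    unfolding S1_def
  proof (intro has_contour_integral_sum has_contour_integral_lmul)
    fix m assume "m \<in> {..<N}"
    have "(\<lambda>u. G u * exp (- (\<i> * of_nat m * u))) contour_integrable_on linepath a1 a2"
      by (intro contour_integrable_continuous_linepath continuous_intros
            continuous_on_subset[OF Gcont bot_strip])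
    then show "((\<lambda>u. G u * exp (- (\<i> * of_nat m * u))) has_contour_integral alpha G a m) (linepath a1 a2)"
      unfolding alpha_def a1_def a2_def by (rule has_contour_integral_integral)
  qed simp
  have E1: "norm (I1 - S1) \<le> B * (\<rho>^N / (1 - \<rho>)) * (2 * pi)"
  proof -
    have "((\<lambda>u. \<Phi> u - (\<Sum>m<N. (\<i> * exp (\<i> * of_nat m * xc)) * (G u * exp (- (\<i> * of_nat m * u)))))
        has_contour_integral (I1 - S1)) (linepath a1 a2)"
      using has_contour_integral_diff[OF has_contour_integral_integral[OF ci1] hS1] by (simp add: I1_def)
    then have "((\<lambda>u. G u * (\<i> * r u ^ N / (1 - r u))) has_contour_integral (I1 - S1)) (linepath a1 a2)"
      by (rule has_contour_integral_eq) (simp add: bot_eq bot_im)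
    then have "norm (I1 - S1) \<le> B * (\<rho>^N / (1 - \<rho>)) * norm (a2 - a1)"
    proof (rule has_contour_integral_bound_linepath)
      show "0 \<le> B * (\<rho>^N / (1 - \<rho>))" using B0 \<rho> by simp
      fix u assume u: "u \<in> closed_segment a1 a2"
      then have im: "Im u = -a" using bot_im by simp
      have "norm (G u) \<le> B" using bnd[of u] im a by simp
      moreover have "norm (\<i> * r u ^ N / (1 - r u)) \<le> \<rho>^N / (1 - \<rho>)"
        using geo_err_bound[OF r_norm[OF im] \<rho>(2), of N] by (simp add: norm_mult norm_divide)
      ultimately show "norm (G u * (\<i> * r u ^ N / (1 - r u))) \<le> B * (\<rho>^N / (1 - \<rho>))"
        unfolding norm_mult using B0 by (intro mult_mono) auto
    qed
    moreover have "norm (a2 - a1) = 2 * pi"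
    proof -
      have "a2 - a1 = complex_of_real (2*pi)" by (simp add: a1_def a2_def complex_eq_iff)
      then show ?thesis by simp
    qed
    ultimately show ?thesis by simp
  qed
  have top_im: "Im u = a" if "u \<in> path_image (linepath a3 a4)" for u
    using that by (simp add: a3_def a4_def closed_segment_same_Im)
  have top_strip: "closed_segment a3 a4 \<subseteq> {z. \<bar>Im z\<bar> < h}"
    using top_im a by auto
  define s where "s = (\<lambda>u. exp (\<i> * (u - xc)))"
  have s_norm: "norm (s u) = \<rho>" if "Im u = a" for u
    using that by (simp add: s_def \<rho>_def xc_def)
  have top_eq: "\<Phi> u = (\<Sum>m<N. (- \<i> * exp (- (\<i> * of_nat (Suc m) * xc))) * (G u * exp (\<i> * of_nat (Suc m) * u)))
                + G u * (- \<i> * s u ^ Suc N / (1 - s u))" if "Im u = a" for u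
  proof -
    have s1: "s u \<noteq> 1" using s_norm[OF that] \<rho> by auto
    have sE: "s u = E u / E xc" by (simp add: s_def E_def exp_diff[symmetric] algebra_simps)
    have "E u - E xc \<noteq> 0" using s1 Enz[of xc] by (auto simp: sE)
    then have "K u = - \<i> * s u * (1 / (1 - s u))" using Enz[of u] Enz[of xc]
      by (simp add: K_def sE field_simps)
    also have "\<dots> = - \<i> * s u * ((\<Sum>m<N. s u ^ m) + s u ^ N / (1 - s u))" using geo_split[OF s1] by simp
    also have "\<dots> = - \<i> * ((\<Sum>m<N. s u ^ Suc m) + s u ^ Suc N / (1 - s u))"
      by (simp add: sum_distrib_left distrib_left mult.assoc)
    finally have "\<Phi> u = G u * (- \<i> * ((\<Sum>m<N. s u ^ Suc m) + s u ^ Suc N / (1 - s u)))"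
      by (simp add: \<Phi>_def)
    moreover have "s u ^ Suc m = exp (- (\<i> * of_nat (Suc m) * xc)) * exp (\<i> * of_nat (Suc m) * u)" for m
    proof -
      have "s u ^ Suc m = exp (of_nat (Suc m) * (\<i> * (u - xc)))" by (simp only: s_def exp_of_nat_mult)
      also have "\<dots> = exp (- (\<i> * of_nat (Suc m) * xc) + \<i> * of_nat (Suc m) * u)"
        by (rule arg_cong[where f = exp]) (simp add: algebra_simps)
      also have "\<dots> = exp (- (\<i> * of_nat (Suc m) * xc)) * exp (\<i> * of_nat (Suc m) * u)"
        by (rule exp_add)
      finally show ?thesis .
    qed
    ultimately show ?thesis by (simp add: algebra_simps sum_distrib_left sum_distrib_right)
  qed
  define S3 where "S3 = (\<Sum>m<N. (- \<i> * exp (- (\<i> * of_nat (Suc m) * xc))) * beta G a (Suc m))"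
  have hS3: "((\<lambda>u. \<Sum>m<N. (- \<i> * exp (- (\<i> * of_nat (Suc m) * xc))) * (G u * exp (\<i> * of_nat (Suc m) * u)))
      has_contour_integral S3) (linepath a3 a4)"
    unfolding S3_def
  proof (intro has_contour_integral_sum has_contour_integral_lmul)
    fix m assume "m \<in> {..<N}"
    have "(\<lambda>u. G u * exp (\<i> * of_nat (Suc m) * u)) contour_integrable_on linepath a3 a4"
      by (intro contour_integrable_continuous_linepath continuous_intros
            continuous_on_subset[OF Gcont top_strip])
    then show "((\<lambda>u. G u * exp (\<i> * of_nat (Suc m) * u)) has_contour_integral beta G a (Suc m)) (linepath a3 a4)"
      unfolding beta_def a3_def a4_def by (rule has_contour_integral_integral)
  qed simp
  have E3: "norm (I3 - S3) \<le> B * (\<rho>^N / (1 - \<rho>)) * (2 * pi)"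
  proof -
    have "((\<lambda>u. \<Phi> u - (\<Sum>m<N. (- \<i> * exp (- (\<i> * of_nat (Suc m) * xc))) * (G u * exp (\<i> * of_nat (Suc m) * u))))
        has_contour_integral (I3 - S3)) (linepath a3 a4)"
      using has_contour_integral_diff[OF has_contour_integral_integral[OF ci3] hS3] by (simp add: I3_def)
    then have "((\<lambda>u. G u * (- \<i> * s u ^ Suc N / (1 - s u))) has_contour_integral (I3 - S3)) (linepath a3 a4)"
      by (rule has_contour_integral_eq) (simp add: top_eq top_im)
    then have "norm (I3 - S3) \<le> B * (\<rho>^N / (1 - \<rho>)) * norm (a4 - a3)"
    proof (rule has_contour_integral_bound_linepath)
      show "0 \<le> B * (\<rho>^N / (1 - \<rho>))" using B0 \<rho> by simp
      fix u assume u: "u \<in> closed_segment a3 a4"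
      then have im: "Im u = a" using top_im by simp
      have "norm (G u) \<le> B" using bnd[of u] im a by simp
      moreover have "norm (- \<i> * s u ^ Suc N / (1 - s u)) \<le> \<rho>^Suc N / (1 - \<rho>)"
        using geo_err_bound[OF s_norm[OF im] \<rho>(2), of "Suc N"] by (simp add: norm_mult norm_divide)
      moreover have "\<rho>^Suc N / (1 - \<rho>) \<le> \<rho>^N / (1 - \<rho>)"
        using \<rho> by (intro divide_right_mono) (auto simp: power_Suc mult_left_le_one_le)
      ultimately show "norm (G u * (- \<i> * s u ^ Suc N / (1 - s u))) \<le> B * (\<rho>^N / (1 - \<rho>))"
        unfolding norm_mult using B0 by (intro mult_mono) auto
    qed
    moreover have "norm (a4 - a3) = 2 * pi"
    proof -
      have "a4 - a3 = - complex_of_real (2*pi)" by (simp add: a3_def a4_def complex_eq_iff)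
      then show ?thesis by (simp only: norm_minus_cancel norm_of_real) simp
    qed
    ultimately show ?thesis by simp
  qed
  have I13: "I1 + I3 = 2*pi*\<i>*G xc" using sum4 I24 by simp
  have T2: "(2*pi) * Tpoly G a N xc = (\<Sum>m<N. alpha G a m * exp (\<i> * of_nat m * xc))
      - (\<Sum>m<N. beta G a (Suc m) * exp (- (\<i> * of_nat (Suc m) * xc)))"
    by (simp add: Tpoly_def)
  have S1': "S1 = \<i> * (\<Sum>m<N. alpha G a m * exp (\<i> * of_nat m * xc))"
    unfolding S1_def sum_distrib_left by (rule sum.cong) (simp_all add: mult_ac)
  have S3': "S3 = - \<i> * (\<Sum>m<N. beta G a (Suc m) * exp (- (\<i> * of_nat (Suc m) * xc)))"
    unfolding S3_def sum_distrib_left by (rule sum.cong) (simp_all add: mult_ac)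
  have S13: "S1 + S3 = \<i> * ((2*pi) * Tpoly G a N xc)"
    unfolding T2 S1' S3' by (simp add: algebra_simps)
  have diff: "G xc - Tpoly G a N xc = ((I1 - S1) + (I3 - S3)) / (2*pi*\<i>)"
    using I13 S13 by (simp add: field_simps)
  have "norm (G xc - Tpoly G a N xc) = norm ((I1 - S1) + (I3 - S3)) / (2*pi)"
    unfolding diff by (simp add: norm_divide norm_mult)
  also have "\<dots> \<le> (norm (I1 - S1) + norm (I3 - S3)) / (2*pi)"
    by (intro divide_right_mono norm_triangle_ineq) simp
  also have "\<dots> \<le> (B * (\<rho>^N / (1 - \<rho>)) * (2 * pi) + B * (\<rho>^N / (1 - \<rho>)) * (2 * pi)) / (2*pi)"
    using E1 E3 by (intro divide_right_mono add_mono) auto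
  also have "\<dots> = 2 * (B * (\<rho>^N / (1 - \<rho>)))"
    by (simp add: divide_simps)
  also have "\<dots> = 2 * B * \<rho>^N / (1 - \<rho>)" by simp
  also have "\<rho>^N = exp (-a * N)" by (simp add: \<rho>_def exp_of_nat_mult[symmetric] mult.commute)
  finally show ?thesis by (simp add: xc_def \<rho>_def)
qed


lemma alpha_bound:
  assumes hol: "G holomorphic_on {z. \<bar>Im z\<bar> < h}"
    and bnd: "\<And>z. \<bar>Im z\<bar> < h \<Longrightarrow> norm (G z) \<le> B"
    and a: "0 < a" "a < h"
  shows "norm (alpha G a m) \<le> B * exp (- a * m) * (2 * pi)"
proof -
  have "norm (G 0) \<le> B" using bnd[of 0] a by simp
  then have B0: "0 \<le> B" using norm_ge_zero[of "G 0"] by linarith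
  have Gcont: "continuous_on {z. \<bar>Im z\<bar> < h} G" using hol holomorphic_on_imp_continuous_on by blast
  define p where "p = linepath (Complex (-pi) (-a)) (Complex pi (-a))"
  have im: "u \<in> closed_segment (Complex (-pi) (-a)) (Complex pi (-a)) \<Longrightarrow> Im u = -a" for u
    by (simp add: closed_segment_same_Im)
  have sub: "closed_segment (Complex (-pi) (-a)) (Complex pi (-a)) \<subseteq> {z. \<bar>Im z\<bar> < h}"
    using im a by auto
  have "(\<lambda>u. G u * exp (- (\<i> * of_nat m * u))) contour_integrable_on p"
    unfolding p_def by (intro contour_integrable_continuous_linepath continuous_intros
            continuous_on_subset[OF Gcont sub])
  then have "((\<lambda>u. G u * exp (- (\<i> * of_nat m * u))) has_contour_integral alpha G a m) p"
    unfolding alpha_def p_def by (rule has_contour_integral_integral[unfolded p_def])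
  then have "norm (alpha G a m) \<le> B * exp (- a * m) * norm (Complex pi (-a) - Complex (-pi) (-a))"
    unfolding p_def
  proof (rule has_contour_integral_bound_linepath)
    show "0 \<le> B * exp (- a * m)" using B0 by simp
    fix u assume u: "u \<in> closed_segment (Complex (-pi) (-a)) (Complex pi (-a))"
    then have "norm (G u) \<le> B" using bnd[of u] im[OF u] a by simp
    moreover have "norm (exp (- (\<i> * of_nat m * u))) = exp (- a * m)" using im[OF u] by simp
    ultimately show "norm (G u * exp (- (\<i> * of_nat m * u))) \<le> B * exp (- a * m)"
      unfolding norm_mult using B0 by (intro mult_mono) auto
  qed
  moreover have "Complex pi (-a) - Complex (-pi) (-a) = complex_of_real (2*pi)" by (simp add: complex_eq_iff)
  ultimately show ?thesis by simp
qed

lemma beta_bound: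
  assumes hol: "G holomorphic_on {z. \<bar>Im z\<bar> < h}"
    and bnd: "\<And>z. \<bar>Im z\<bar> < h \<Longrightarrow> norm (G z) \<le> B"
    and a: "0 < a" "a < h"
  shows "norm (beta G a m) \<le> B * exp (- a * m) * (2 * pi)"
proof -
  have "norm (G 0) \<le> B" using bnd[of 0] a by simp
  then have B0: "0 \<le> B" using norm_ge_zero[of "G 0"] by linarith
  have Gcont: "continuous_on {z. \<bar>Im z\<bar> < h} G" using hol holomorphic_on_imp_continuous_on by blast
  define p where "p = linepath (Complex pi a) (Complex (-pi) a)"
  have im: "u \<in> closed_segment (Complex pi a) (Complex (-pi) a) \<Longrightarrow> Im u = a" for u
    by (simp add: closed_segment_same_Im)
  have sub: "closed_segment (Complex pi a) (Complex (-pi) a) \<subseteq> {z. \<bar>Im z\<bar> < h}"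
    using im a by auto
  have "(\<lambda>u. G u * exp (\<i> * of_nat m * u)) contour_integrable_on p"
    unfolding p_def by (intro contour_integrable_continuous_linepath continuous_intros
            continuous_on_subset[OF Gcont sub])
  then have "((\<lambda>u. G u * exp (\<i> * of_nat m * u)) has_contour_integral beta G a m) p"
    unfolding beta_def p_def by (rule has_contour_integral_integral[unfolded p_def])
  then have "norm (beta G a m) \<le> B * exp (- a * m) * norm (Complex (-pi) a - Complex pi a)"
    unfolding p_def
  proof (rule has_contour_integral_bound_linepath)
    show "0 \<le> B * exp (- a * m)" using B0 by simp
    fix u assume u: "u \<in> closed_segment (Complex pi a) (Complex (-pi) a)"
    then have "norm (G u) \<le> B" using bnd[of u] im[OF u] a by simp
    moreover have "norm (exp (\<i> * of_nat m * u)) = exp (- a * m)" using im[OF u] by simp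
    ultimately show "norm (G u * exp (\<i> * of_nat m * u)) \<le> B * exp (- a * m)"
      unfolding norm_mult using B0 by (intro mult_mono) auto
  qed
  moreover have "Complex (-pi) a - Complex pi a = - complex_of_real (2*pi)" by (simp add: complex_eq_iff)
  ultimately show ?thesis by (simp only: norm_minus_cancel norm_of_real) simp
qed


lemma term_bound:
  fixes c e :: complex
  assumes "norm c \<le> B * exp (- a * k) * (2 * pi)" "norm e \<le> exp (k * H)" "k \<le> N" "a \<le> H" "0 \<le> B"
  shows "norm (c * e) \<le> 2 * pi * B * exp (N * (H - a))"
proof -
  have "norm (c * e) \<le> (B * exp (- a * k) * (2 * pi)) * exp (k * H)"
    unfolding norm_mult using assms by (intro mult_mono) auto
  also have "\<dots> = 2 * pi * B * exp (k * (H - a))"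
    by (simp add: algebra_simps exp_add[symmetric] exp_diff)
  also have "\<dots> \<le> 2 * pi * B * exp (N * (H - a))"
    using assms by (intro mult_left_mono) (auto intro!: mult_right_mono)
  finally show ?thesis .
qed

lemma Tpoly_bound:
  assumes hol: "G holomorphic_on {z. \<bar>Im z\<bar> < h}"
    and bnd: "\<And>z. \<bar>Im z\<bar> < h \<Longrightarrow> norm (G z) \<le> B"
    and a: "0 < a" "a < h" "a \<le> H" and z: "\<bar>Im z\<bar> \<le> H"
  shows "norm (Tpoly G a N z) \<le> 2 * N * B * exp (N * (H - a))"
proof -
  have "norm (G 0) \<le> B" using bnd[of 0] a by simp
  then have B0: "0 \<le> B" using norm_ge_zero[of "G 0"] by linarith
  define X where "X = 2 * pi * B * exp (N * (H - a))"
  have 1: "norm (\<Sum>m<N. alpha G a m * exp (\<i> * of_nat m * z)) \<le> N * X"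
  proof -
    have "norm (\<Sum>m<N. alpha G a m * exp (\<i> * of_nat m * z)) \<le> (\<Sum>m<N. X)"
    proof (intro sum_norm_le)
      fix m assume "m \<in> {..<N}"
      have "real m * (- Im z) \<le> real m * H" by (intro mult_left_mono) (use z in auto)
      then have "norm (exp (\<i> * of_nat m * z)) \<le> exp (real m * H)" by simp
      then show "norm (alpha G a m * exp (\<i> * of_nat m * z)) \<le> X"
        unfolding X_def using \<open>m \<in> {..<N}\<close> B0 a
        by (intro term_bound[OF alpha_bound[OF hol bnd a(1,2)]]) auto
    qed
    then show ?thesis by simp
  qed
  have 2: "norm (\<Sum>m<N. beta G a (Suc m) * exp (- (\<i> * of_nat (Suc m) * z))) \<le> N * X"
  proof -
    have "norm (\<Sum>m<N. beta G a (Suc m) * exp (- (\<i> * of_nat (Suc m) * z))) \<le> (\<Sum>m<N. X)"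
    proof (intro sum_norm_le)
      fix m assume "m \<in> {..<N}"
      have "real (Suc m) * Im z \<le> real (Suc m) * H" by (intro mult_left_mono) (use z in auto)
      then have "norm (exp (- (\<i> * of_nat (Suc m) * z))) \<le> exp (real (Suc m) * H)" by simp
      then show "norm (beta G a (Suc m) * exp (- (\<i> * of_nat (Suc m) * z))) \<le> X"
        unfolding X_def using \<open>m \<in> {..<N}\<close> B0 a
        by (intro term_bound[OF beta_bound[OF hol bnd a(1,2)]]) auto
    qed
    then show ?thesis by simp
  qed
  have "norm (Tpoly G a N z) \<le> (N * X + N * X) / (2 * pi)"
  proof -
    have n: "norm (complex_of_real (2*pi)) = 2*pi" by simp
    have "norm ((\<Sum>m<N. alpha G a m * exp (\<i> * of_nat m * z)) -
       (\<Sum>m<N. beta G a (Suc m) * exp (- (\<i> * of_nat (Suc m) * z)))) \<le> N * X + N * X"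
      by (rule order_trans[OF norm_triangle_ineq4]) (intro add_mono 1 2)
    then show ?thesis
      unfolding Tpoly_def norm_divide n by (intro divide_right_mono) auto
  qed
  also have "\<dots> = 2 * real N * B * exp (N * (H - a))" by (simp add: X_def)
  finally show ?thesis .
qed


lemma Tpoly_hol: "Tpoly G a N holomorphic_on S"
  unfolding Tpoly_def[abs_def] by (intro holomorphic_intros) simp

lemma Tpoly_cnj: "cnj (Tpoly G a N (cnj z)) =
   ((\<Sum>m<N. cnj (alpha G a m) * exp (- (\<i> * of_nat m * z)))
    - (\<Sum>m<N. cnj (beta G a (Suc m)) * exp (\<i> * of_nat (Suc m) * z))) / (2*pi)"
  by (simp add: Tpoly_def exp_cnj)

lemma Tpoly_cnj_hol: "(\<lambda>z. cnj (Tpoly G a N (cnj z))) holomorphic_on S"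
  unfolding Tpoly_cnj by (intro holomorphic_intros) simp

lemma exp_shift_2pi: "exp (c * of_nat m * (z + 2 * complex_of_real pi)) = exp (c * of_nat m * z)"
  if "c = \<i> \<or> c = - \<i>"
proof -
  have "c * of_nat m * (z + 2 * complex_of_real pi) = c * of_nat m * z + of_nat m * (c * 2 * pi)"
    by (simp add: algebra_simps)
  moreover have "exp (c * 2 * complex_of_real pi) = 1" using that
  proof -
    have "\<exists>n::int. (-1::real) = of_int n" by (rule exI[of _ "-1"]) simp
    then show ?thesis using that by (auto simp: exp_eq_1)
  qed
  ultimately show ?thesis by (simp add: exp_add exp_of_nat_mult)
qed

lemma Tpoly_periodic: "Tpoly G a N (z + 2 * complex_of_real pi) = Tpoly G a N z"
proof -
  have 1: "exp (\<i> * of_nat m * (z + 2 * complex_of_real pi)) = exp (\<i> * of_nat m * z)" for m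
    using exp_shift_2pi[of "\<i>"] by simp
  have 2: "exp (- (\<i> * of_nat m * (z + 2 * complex_of_real pi))) = exp (- (\<i> * of_nat m * z))" for m
    using exp_shift_2pi[of "-\<i>" m z] by simp
  show ?thesis unfolding Tpoly_def 1 2 ..
qed

lemma periodic_int:
  fixes g :: "real \<Rightarrow> 'a"
  assumes per: "\<And>x. g (x + p) = g x"
  shows "g (x + of_int k * p) = g x"
proof -
  have nat: "g (y + of_nat n * p) = g y" for y n
  proof (induction n)
    case (Suc n)
    have "g (y + of_nat (Suc n) * p) = g ((y + of_nat n * p) + p)" by (simp add: algebra_simps)
    also have "\<dots> = g y" using per Suc by simp
    finally show ?case .
  qed simp
  show ?thesis
  proof (cases "k \<ge> 0")
    case True
    then obtain n where "k = int n" using nonneg_int_cases by blast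
    then show ?thesis using nat by simp
  next
    case False
    then obtain n where k: "k = - int n" by (metis linorder_le_less_linear neg_int_cases less_imp_le minus_minus)
    have "g x = g ((x + of_int k * p) + of_nat n * p)" by (simp add: k)
    also have "\<dots> = g (x + of_int k * p)" by (rule nat)
    finally show ?thesis by simp
  qed
qed


lemma core_all:
  assumes hol: "G holomorphic_on {z. \<bar>Im z\<bar> < h}"
    and perR: "\<And>x::real. G (of_real (x + 2*pi)) = G (of_real x)"
    and bnd: "\<And>z. \<bar>Im z\<bar> < h \<Longrightarrow> norm (G z) \<le> B"
    and a: "0 < a" "a < h"
  shows "norm (G (of_real x) - Tpoly G a N (of_real x)) \<le> 2 * B * exp (-a * N) / (1 - exp (-a))"
proof -
  have per: "\<And>z. \<bar>Im z\<bar> < h \<Longrightarrow> G (z + 2*pi) = G z"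
    using G_periodic[OF hol _ perR] a by simp
  define c where "c = 2 * B * exp (-a * N) / (1 - exp (-a))"
  define g where "g = (\<lambda>x::real. G (of_real x) - Tpoly G a N (of_real x))"
  have Gcont: "continuous_on {z. \<bar>Im z\<bar> < h} G" using hol holomorphic_on_imp_continuous_on by blast
  have gcont: "continuous_on UNIV g"
  proof -
    have "continuous_on UNIV (\<lambda>x::real. G (of_real x))"
      by (rule continuous_on_compose2[OF Gcont continuous_on_of_real]) (use a in auto)
    moreover have "continuous_on UNIV (\<lambda>x::real. Tpoly G a N (of_real x))"
      by (rule continuous_on_compose2[OF holomorphic_on_imp_continuous_on[OF Tpoly_hol] continuous_on_of_real])
        auto
    ultimately show ?thesis unfolding g_def by (intro continuous_intros)
  qed
  have cl: "closed {x. norm (g x) \<le> c}"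
    by (intro closed_Collect_le continuous_intros gcont)
  have "{-pi<..<pi} \<subseteq> {x. norm (g x) \<le> c}"
    using core[OF hol per bnd a] by (auto simp: g_def c_def)
  then have "closure {-pi<..<pi} \<subseteq> {x. norm (g x) \<le> c}"
    using cl closure_minimal by blast
  then have main: "-pi \<le> y \<Longrightarrow> y \<le> pi \<Longrightarrow> norm (g y) \<le> c" for y by auto
  have gper: "g (y + 2*pi) = g y" for y
    using perR[of y] Tpoly_periodic[of G a N "of_real y"] by (simp add: g_def)
  define k where "k = \<lfloor>(x + pi) / (2*pi)\<rfloor>"
  have k1: "of_int k \<le> (x + pi) / (2*pi)" and k2: "(x + pi) / (2*pi) < of_int k + 1"
    unfolding k_def by linarith+
  have "2*pi * of_int k \<le> x + pi" using k1 by (simp add: field_simps)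
  moreover have "x + pi < 2*pi * (of_int k + 1)" using k2 by (simp add: field_simps)
  ultimately have "-pi \<le> x + of_int (-k) * (2*pi)" "x + of_int (-k) * (2*pi) \<le> pi"
    by (auto simp: algebra_simps)
  then have "norm (g (x + of_int (-k) * (2*pi))) \<le> c" by (rule main)
  moreover have "g (x + of_int (-k) * (2*pi)) = g x" by (rule periodic_int[where g = g and p = "2*pi", OF gper])
  ultimately show ?thesis by (simp add: g_def c_def)
qed


lemma sup_nonneg:
  assumes "0 \<le> H" "is_continuation H f G"
  shows "0 \<le> (SUP z\<in>strip H. norm (G z))"
proof -
  obtain M where M: "\<And>y. y \<in> G ` strip H \<Longrightarrow> norm y \<le> M"
    using assms(2) unfolding is_continuation_def bounded_iff by blast
  have "bdd_above ((\<lambda>z. norm (G z)) ` strip H)"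
    by (rule bdd_aboveI2[of _ _ M]) (use M in auto)
  moreover have "0 \<in> strip H" using assms(1) by (simp add: strip_def)
  ultimately show ?thesis by (rule cSUP_upper2) simp
qed

lemma A_norm_nonneg:
  assumes "0 \<le> H" "f \<in> A_space H"
  shows "0 \<le> A_norm H f"
  unfolding A_norm_def
proof (rule cInf_greatest)
  obtain G where "is_continuation H f G" using assms(2) by (auto simp: A_space_def)
  then show "{(SUP z\<in>strip H. norm (G z)) |G. is_continuation H f G} \<noteq> {}" by blast
next
  fix x assume "x \<in> {(SUP z\<in>strip H. norm (G z)) |G. is_continuation H f G}"
  then show "0 \<le> x" using sup_nonneg[OF assms(1)] by blast
qed

lemma A_norm_le:
  assumes "0 \<le> H" "is_continuation H f P" "\<And>z. z \<in> strip H \<Longrightarrow> norm (P z) \<le> K"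
  shows "A_norm H f \<le> K"
proof -
  have "A_norm H f \<le> (SUP z\<in>strip H. norm (P z))"
    unfolding A_norm_def
  proof (rule cInf_lower)
    show "(SUP z\<in>strip H. norm (P z)) \<in> {(SUP z\<in>strip H. norm (G z)) |G. is_continuation H f G}"
      using assms(2) by blast
    show "bdd_below {(SUP z\<in>strip H. norm (G z)) |G. is_continuation H f G}"
      by (rule bdd_belowI[of _ 0]) (use sup_nonneg[OF assms(1)] in blast)
  qed
  also have "\<dots> \<le> K"
  proof (rule cSUP_least)
    show "strip H \<noteq> {}" using assms(1) by (auto simp: strip_def intro!: exI[of _ 0])
  qed (use assms(3) in auto)
  finally show ?thesis .
qed

lemma appr_bounds:
  assumes "0 \<le> H" "Fs \<in> A_space H" "\<forall>x. \<bar>F x - Fs x\<bar> \<le> \<epsilon>"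
  shows "0 \<le> approachability H \<epsilon> F" "approachability H \<epsilon> F \<le> A_norm H Fs"
proof -
  let ?X = "{A_norm H Fs |Fs. Fs \<in> A_space H \<and> (\<forall>x. \<bar>F x - Fs x\<bar> \<le> \<epsilon>)}"
  have mem: "A_norm H Fs \<in> ?X" using assms by blast
  have lb: "\<And>y. y \<in> ?X \<Longrightarrow> 0 \<le> y" using A_norm_nonneg[OF assms(1)] by blast
  show "0 \<le> approachability H \<epsilon> F"
    unfolding approachability_def by (rule cInf_greatest) (use mem lb in auto)
  show "approachability H \<epsilon> F \<le> A_norm H Fs"
    unfolding approachability_def by (rule cInf_lower[OF mem]) (rule bdd_belowI[of _ 0], use lb in blast)
qed


lemma one_eps:
  assumes hol: "G holomorphic_on {z. \<bar>Im z\<bar> < h}"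
    and perR: "\<And>x::real. G (of_real (x + 2*pi)) = G (of_real x)"
    and bnd: "\<And>z. \<bar>Im z\<bar> < h \<Longrightarrow> norm (G z) \<le> B"
    and Greal: "\<And>x. G (of_real x) = of_real (F x)"
    and hH: "0 < h" "h < H" and eps: "0 < \<epsilon>"
    and B0: "0 < B"
    and Ndef: "N = nat \<lceil>ln ((2 * B / (1 - exp (-(h/2)))) / \<epsilon>) / (h/2)\<rceil>"
  shows "\<exists>Fs\<in>A_space H. (\<forall>x. \<bar>F x - Fs x\<bar> \<le> \<epsilon>) \<and> A_norm H Fs \<le> (2 * B / (h/2)) * exp (N * H)"
proof -
  define a where "a = h/2"
  have a: "0 < a" "a < h" "a \<le> H" using hH by (auto simp: a_def)
  define c where "c = 2 * B / (1 - exp (-a))"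
  have c: "0 < c" using a B0 by (simp add: c_def)
  define T where "T = Tpoly G a N"
  define Fs where "Fs = (\<lambda>x::real. Re (T (of_real x)))"
  define P where "P = (\<lambda>z. (T z + cnj (T (cnj z))) / 2)"
  define K where "K = (2 * B / a) * exp (N * H)"
  have Phol: "P holomorphic_on S" for S
    unfolding P_def T_def by (intro holomorphic_intros Tpoly_hol Tpoly_cnj_hol[unfolded o_def]) auto
  have Pbound: "norm (P z) \<le> K" if "z \<in> strip H" for z
  proof -
    have im: "\<bar>Im z\<bar> \<le> H" "\<bar>Im (cnj z)\<bar> \<le> H" using that by (auto simp: strip_def)
    have "norm (P z) \<le> (norm (T z) + norm (T (cnj z))) / 2"
      unfolding P_def norm_divide using norm_triangle_ineq[of "T z" "cnj (T (cnj z))"] by simp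
    also have "\<dots> \<le> (2 * N * B * exp (N * (H - a)) + 2 * N * B * exp (N * (H - a))) / 2"
      unfolding T_def using Tpoly_bound[OF hol bnd a im(1)] Tpoly_bound[OF hol bnd a im(2)]
      by (intro divide_right_mono add_mono) auto
    also have "\<dots> = 2 * B * (N * exp (- (a * N))) * exp (N * H)"
      by (simp add: algebra_simps exp_diff exp_minus field_simps)
    also have "\<dots> \<le> 2 * B * (1 / a) * exp (N * H)"
    proof -
      have "a * N \<le> exp (a * N)" using exp_ge_add_one_self[of "a * N"] by linarith
      then have "N * exp (- (a * N)) \<le> 1 / a" using a
        by (simp add: exp_minus field_simps)
      then show ?thesis using B0 by (intro mult_right_mono mult_left_mono) auto
    qed
    also have "\<dots> = K" by (simp add: K_def)
    finally show ?thesis .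
  qed
  have cont: "is_continuation H Fs P"
    unfolding is_continuation_def
  proof (intro conjI allI)
    show "P holomorphic_on {z. \<bar>Im z\<bar> < H}" by (rule Phol)
    show "continuous_on (strip H) P" by (rule holomorphic_on_imp_continuous_on[OF Phol])
    show "bounded (P ` strip H)" unfolding bounded_iff using Pbound by blast
    fix x
    show "P (of_real x) = of_real (Fs x)"
      unfolding P_def Fs_def by (simp add: complex_add_cnj)
  qed
  have perFs: "Fs (x + 2*pi) = Fs x" for x
    using Tpoly_periodic[of G a N "of_real x"] by (simp add: Fs_def T_def)
  have FsA: "Fs \<in> A_space H" unfolding A_space_def using perFs cont by blast
  have err: "\<bar>F x - Fs x\<bar> \<le> \<epsilon>" for x
  proof -
    have "\<bar>F x - Fs x\<bar> = \<bar>Re (G (of_real x) - T (of_real x))\<bar>" by (simp add: Fs_def Greal)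
    also have "\<dots> \<le> norm (G (of_real x) - T (of_real x))" by (rule abs_Re_le_cmod)
    also have "\<dots> \<le> 2 * B * exp (-a * N) / (1 - exp (-a))"
      unfolding T_def by (rule core_all[OF hol perR bnd a(1,2)])
    also have "\<dots> = c * exp (- (a * N))" by (simp add: c_def)
    also have "\<dots> \<le> c * exp (- ln (c / \<epsilon>))"
    proof -
      have "ln (c / \<epsilon>) / a \<le> N" unfolding Ndef c_def a_def by linarith
      then have "ln (c / \<epsilon>) \<le> a * N" using a by (simp add: field_simps)
      then show ?thesis using c by simp
    qed
    also have "\<dots> = \<epsilon>" using c eps by (simp add: exp_minus)
    finally show ?thesis .
  qed
  have "A_norm H Fs \<le> K" by (rule A_norm_le[OF _ cont Pbound]) (use hH in auto)
  then show ?thesis using FsA err by (auto simp: K_def a_def)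
qed


theorem lemma2:
  shows "\<exists>C::real. \<forall>h H F. 0 < h \<and> h < H \<and> F \<in> A_space h \<longrightarrow>
     (\<forall>\<^sub>F \<epsilon> in at_right 0.
        (\<exists>Fs\<in>A_space H. \<forall>x. \<bar>F x - Fs x\<bar> \<le> \<epsilon>) \<and>
        log 2 (approachability H \<epsilon> F) \<le> C * (H / h) * log 2 (1 / \<epsilon>))"
proof (intro exI[of _ 3] allI impI)
  fix h H :: real and F :: "real \<Rightarrow> real"
  assume asm: "0 < h \<and> h < H \<and> F \<in> A_space h"
  then have hH: "0 < h" "h < H" and FA: "F \<in> A_space h" by auto
  obtain G where perF: "\<And>x. F (x + 2*pi) = F x" and cont: "is_continuation h F G"
    using FA unfolding A_space_def by blast
  have hol: "G holomorphic_on {z. \<bar>Im z\<bar> < h}" and Greal: "\<And>x. G (of_real x) = of_real (F x)"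
    using cont by (auto simp: is_continuation_def)
  obtain M where M: "\<And>y. y \<in> G ` strip h \<Longrightarrow> norm y \<le> M"
    using cont unfolding is_continuation_def bounded_iff by blast
  define B where "B = max 1 M"
  have B0: "0 < B" by (simp add: B_def)
  have bnd: "norm (G z) \<le> B" if "\<bar>Im z\<bar> < h" for z
  proof -
    have "z \<in> strip h" using that by (simp add: strip_def)
    then have "norm (G z) \<le> M" using M by blast
    then show ?thesis by (simp add: B_def)
  qed
  have perR: "G (of_real (x + 2*pi)) = G (of_real x)" for x
    using Greal[of "x + 2*pi"] Greal[of x] perF[of x] by simp
  define a where "a = h/2"
  have a: "0 < a" using hH by (simp add: a_def)
  define c where "c = 2 * B / (1 - exp (-a))"
  have c: "0 < c" using a B0 by (simp add: c_def)
  define D where "D = \<bar>ln (2 * B / a)\<bar> + H + (H / a) * \<bar>ln c\<bar>"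
  define e0 where "e0 = min (min 1 c) (exp (- D * h / H))"
  have e0: "0 < e0" using c by (simp add: e0_def)
  show "\<forall>\<^sub>F \<epsilon> in at_right 0.
        (\<exists>Fs\<in>A_space H. \<forall>x. \<bar>F x - Fs x\<bar> \<le> \<epsilon>) \<and>
        log 2 (approachability H \<epsilon> F) \<le> 3 * (H / h) * log 2 (1 / \<epsilon>)"
    unfolding eventually_at_right_field
  proof (rule exI[of _ e0], rule conjI[OF e0], intro allI impI)
    fix \<epsilon> :: real assume "0 < \<epsilon>" "\<epsilon> < e0"
    then have eps: "0 < \<epsilon>" "\<epsilon> < 1" "\<epsilon> < c" "\<epsilon> < exp (- D * h / H)"
      by (auto simp: e0_def)
    define N where "N = nat \<lceil>ln (c / \<epsilon>) / a\<rceil>"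
    have Ndef: "N = nat \<lceil>ln ((2 * B / (1 - exp (-(h/2)))) / \<epsilon>) / (h/2)\<rceil>"
      by (simp add: N_def c_def a_def)
    obtain Fs where FsA: "Fs \<in> A_space H" and err: "\<forall>x. \<bar>F x - Fs x\<bar> \<le> \<epsilon>"
      and nrm: "A_norm H Fs \<le> (2 * B / (h/2)) * exp (N * H)"
      using one_eps[OF hol perR bnd Greal hH eps(1) B0 Ndef] by blast
    define K where "K = (2 * B / a) * exp (N * H)"
    have K: "0 < K" using B0 a by (simp add: K_def)
    define X where "X = approachability H \<epsilon> F"
    have X: "0 \<le> X" "X \<le> K"
      using appr_bounds[OF _ FsA err] nrm hH by (auto simp: X_def K_def a_def)
    have lneps: "0 < ln (1 / \<epsilon>)" using eps by simp
    have lnc: "0 < ln (c / \<epsilon>)" using eps c by simp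
    have Nle: "real N \<le> ln (c / \<epsilon>) / a + 1"
    proof -
      have "0 \<le> ln (c / \<epsilon>) / a" using lnc a by simp
      then show ?thesis unfolding N_def by linarith
    qed
    have "ln K = ln (2 * B / a) + ln (exp (N * H))" unfolding K_def using B0 a by (intro ln_mult_pos) auto
    then have "ln K = ln (2 * B / a) + N * H" by simp
    also have "\<dots> \<le> \<bar>ln (2 * B / a)\<bar> + (ln (c / \<epsilon>) / a + 1) * H"
      using Nle hH by (intro add_mono mult_right_mono) auto
    also have "\<dots> = \<bar>ln (2 * B / a)\<bar> + H + (H / a) * ln c + (H / a) * ln (1 / \<epsilon>)"
      using c eps by (simp add: ln_div algebra_simps diff_divide_distrib)
    also have "\<dots> \<le> D + (H / a) * ln (1 / \<epsilon>)"
    proof -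
      have "(H / a) * ln c \<le> (H / a) * \<bar>ln c\<bar>" using a hH by (intro mult_left_mono) auto
      then show ?thesis by (simp add: D_def)
    qed
    also have "\<dots> \<le> 3 * (H / h) * ln (1 / \<epsilon>)"
    proof -
      have "ln \<epsilon> < - D * h / H" using eps by (metis exp_less_cancel_iff exp_ln)
      then have "D * h / H < ln (1 / \<epsilon>)" using eps by (simp add: ln_div)
      then have "D < (H / h) * ln (1 / \<epsilon>)" using hH by (simp add: field_simps)
      moreover have "(H / a) * ln (1 / \<epsilon>) = 2 * ((H / h) * ln (1 / \<epsilon>))" by (simp add: a_def)
      ultimately show ?thesis by linarith
    qed
    finally have lnK: "ln K \<le> 3 * (H / h) * ln (1 / \<epsilon>)" .
    show "(\<exists>Fs\<in>A_space H. \<forall>x. \<bar>F x - Fs x\<bar> \<le> \<epsilon>) \<and>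
        log 2 (approachability H \<epsilon> F) \<le> 3 * (H / h) * log 2 (1 / \<epsilon>)"
    proof
      show "\<exists>Fs\<in>A_space H. \<forall>x. \<bar>F x - Fs x\<bar> \<le> \<epsilon>" using FsA err by blast
      have rhs: "3 * (H / h) * log 2 (1 / \<epsilon>) = (3 * (H / h) * ln (1 / \<epsilon>)) / ln 2"
        by (simp add: log_def)
      show "log 2 (approachability H \<epsilon> F) \<le> 3 * (H / h) * log 2 (1 / \<epsilon>)"
      proof (cases "X = 0")
        case True
        have "0 \<le> 3 * (H / h) * ln (1 / \<epsilon>)" using hH lneps by simp
        then have "0 \<le> (3 * (H / h) * ln (1 / \<epsilon>)) / ln 2" by (intro divide_nonneg_pos) auto
        then show ?thesis using True unfolding X_def rhs by (simp add: log_def)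
      next
        case False
        then have "0 < X" using X by simp
        then have "ln X \<le> ln K" using X K by simp
        then have "ln X \<le> 3 * (H / h) * ln (1 / \<epsilon>)" using lnK by linarith
        then have "ln X / ln 2 \<le> (3 * (H / h) * ln (1 / \<epsilon>)) / ln 2" by (intro divide_right_mono) auto
        then show ?thesis unfolding X_def[symmetric] rhs by (simp add: log_def)
      qed
    qed
  qed
qed

end
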